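(* Let $T(x_1,x_2,x_3)$ be a real multivariate polynomial, and suppose $p\mapsto T(p,\sqrt{p},\sqrt{1-p})$ is not the zero function on $[0,1]$. If $T(z,\sqrt{z},\sqrt{1-z})=0$ for some $z\in[0,1]$, then there exist $\delta>0$, a positive integer $k$, and a function $m(p)$ continuous on $[z-\delta,z+\delta]\cap[0,1]$ with $m(z)\neq0$, such that $T(p,\sqrt{p},\sqrt{1-p})=(p-z)^{k/2}m(p)$ for $p\in[z-\delta,z+\delta]\cap[0,1]$. *)

theory Defs
  imports "HOL-Analysis.Analysis"
begin

text \<open>A real polynomial in three variables, given by its coefficient function on
  exponent triples (assumed to have finite support), evaluated at a point.\<close>
definition eval_poly3 :: "(nat \<times> nat \<times> nat \<Rightarrow> real) \<Rightarrow> real \<Rightarrow> real \<Rightarrow> real \<Rightarrow> real" where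
  "eval_poly3 c x1 x2 x3 =
     (\<Sum>e\<in>{e. c e \<noteq> 0}. c e * x1 ^ fst e * x2 ^ fst (snd e) * x3 ^ snd (snd e))"

text \<open>The real "half power" x^(k/2): for even k the ordinary power x^(k div 2);
  for odd k (only meaningful on one side of the base point) |x| powr (k/2).\<close>
definition half_pow :: "real \<Rightarrow> nat \<Rightarrow> real" where
  "half_pow x k = (if even k then x ^ (k div 2) else \<bar>x\<bar> powr (real k / 2))"

end

theory Submission imports Defs "HOL-Complex_Analysis.Conformal_Mappings" begin

definition snc :: "real \<Rightarrow> real" where "snc x = (if x = 0 then 1 else sin x / x)"

lemma isCont_snc: "isCont snc x"
proof cases
  assume "x = 0" then show ?thesis
    using LIM_equal [where g = "\<lambda>x. sin x / x" and a=0 and f=snc and l=1]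
      DERIV_sin [of 0]
    by (auto simp: isCont_def snc_def has_field_derivative_def field_has_derivative_at)
next
  assume "x \<noteq> 0" show ?thesis
    by (rule continuous_transform_within [where \<delta> = "abs x" and f = "\<lambda>x. sin x / x"])
       (auto simp add: dist_real_def \<open>x \<noteq> 0\<close> snc_def)
qed

lemma continuous_on_snc[continuous_intros]:
  "continuous_on S f \<Longrightarrow> continuous_on S (\<lambda>x. snc (f x))"
  using continuous_on_compose[of S f snc, OF _ continuous_at_imp_continuous_on]
  by (auto simp: isCont_snc o_def)

lemma sin_snc: "sin x = x * snc x"
  by (simp add: snc_def)

lemma snc_nz: "\<bar>x\<bar> < pi \<Longrightarrow> snc x \<noteq> 0"
proof -
  assume a: "\<bar>x\<bar> < pi"
  show ?thesis
  proof (cases "x = 0")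
    case False
    have "sin x \<noteq> 0"
    proof (cases "x > 0")
      case True thus ?thesis using sin_gt_zero[of x] a by auto
    next
      case False
      hence "sin (-x) > 0" using sin_gt_zero[of "-x"] a \<open>x \<noteq> 0\<close> by auto
      thus ?thesis by simp
    qed
    thus ?thesis using False by (simp add: snc_def)
  qed (simp add: snc_def)
qed

lemma half_pow_nonneg: "x \<ge> 0 \<Longrightarrow> half_pow x n = sqrt x ^ n"
proof -
  assume x: "x \<ge> 0"
  show ?thesis
  proof (cases "even n")
    case True
    then obtain j where j: "n = 2*j" by auto
    have "sqrt x ^ n = (sqrt x ^ 2) ^ j" by (simp add: j power_mult)
    thus ?thesis using x True j by (simp add: half_pow_def)
  next
    case False
    show ?thesis
    proof (cases "x = 0")
      case True thus ?thesis using False by (auto simp: half_pow_def elim: oddE)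
    next
      case x0: False
      have "x powr (real n / 2) = (x powr (1/2)) powr real n" by (simp add: powr_powr)
      also have "\<dots> = sqrt x ^ n" using x x0 by (simp add: powr_half_sqrt powr_realpow)
      finally show ?thesis using x False by (simp add: half_pow_def)
    qed
  qed
qed

lemma half_pow_nonpos: "x \<le> 0 \<Longrightarrow>
   half_pow x n = (if even n then (-1) ^ (n div 2) else 1) * sqrt (-x) ^ n"
proof -
  assume x: "x \<le> 0"
  show ?thesis
  proof (cases "even n")
    case True
    then obtain j where j: "n = 2*j" by auto
    have "sqrt (-x) ^ n = (sqrt (-x) ^ 2) ^ j" by (simp add: j power_mult)
    also have "\<dots> = (-x)^j" using x by simp
    finally show ?thesis using x True j by (simp add: half_pow_def power_minus')
  next
    case False
    have "half_pow x n = half_pow (-x) n" using False by (simp add: half_pow_def)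
    also have "\<dots> = sqrt (-x) ^ n" using x by (simp add: half_pow_nonneg)
    finally show ?thesis using False by simp
  qed
qed

lemma half_pow_even: "half_pow x (2*n) = x ^ n"
  by (simp add: half_pow_def)


lemma th_props:
  assumes "p \<in> {0..1::real}"
  shows "sin (arcsin (sqrt p)) = sqrt p" "cos (arcsin (sqrt p)) = sqrt (1 - p)"
        "0 \<le> arcsin (sqrt p)" "arcsin (sqrt p) \<le> pi/2"
proof -
  have a0: "0 \<le> sqrt p" "sqrt p \<le> 1" using assms by auto
  have a: "0 \<le> sqrt p" "sqrt p \<le> 1" "-1 \<le> sqrt p" using a0 by linarith+
  show "sin (arcsin (sqrt p)) = sqrt p" using a by simp
  show "cos (arcsin (sqrt p)) = sqrt (1 - p)" using a assms by (simp add: cos_arcsin)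
  show "0 \<le> arcsin (sqrt p)" using arcsin_le_arcsin[of 0 "sqrt p"] a by simp
  show "arcsin (sqrt p) \<le> pi/2" using arcsin_ubound[of "sqrt p"] a by simp
qed

theorem lemma3:
  fixes c :: "nat \<times> nat \<times> nat \<Rightarrow> real" and z :: real
  assumes "finite {e. c e \<noteq> 0}"
    and "\<exists>p\<in>{0..1}. eval_poly3 c p (sqrt p) (sqrt (1 - p)) \<noteq> 0"
    and "z \<in> {0..1}"
    and "eval_poly3 c z (sqrt z) (sqrt (1 - z)) = 0"
  shows "\<exists>\<delta>>0. \<exists>k::nat. k > 0 \<and> (\<exists>m :: real \<Rightarrow> real.
           continuous_on ({z - \<delta>..z + \<delta>} \<inter> {0..1}) m \<and> m z \<noteq> 0 \<and>
           (\<forall>p\<in>{z - \<delta>..z + \<delta>} \<inter> {0..1}.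
              eval_poly3 c p (sqrt p) (sqrt (1 - p)) = half_pow (p - z) k * m p))"
proof -
  define S where "S = {e. c e \<noteq> 0}"
  define f where "f p = eval_poly3 c p (sqrt p) (sqrt (1 - p))" for p
  define th where "th p = arcsin (sqrt p)" for p
  define Hr where "Hr t = (\<Sum>e\<in>S. c e * (sin t ^ 2) ^ fst e * sin t ^ fst (snd e) * cos t ^ snd (snd e))" for t
  define Hc where "Hc w = (\<Sum>e\<in>S. complex_of_real (c e) * (sin w ^ 2) ^ fst e * sin w ^ fst (snd e) * cos w ^ snd (snd e))" for w
  define t0 where "t0 = th z"
  have f_Hr: "f p = Hr (th p)" if "p \<in> {0..1}" for p
  proof -
    have "sin (th p) ^ 2 = p" using th_props[OF that] that by (simp add: th_def)
    thus ?thesis using th_props[OF that]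
      by (simp add: f_def Hr_def eval_poly3_def S_def th_def)
  qed
  have Hc_real: "Hc (of_real t) = of_real (Hr t)" for t
    by (simp add: Hc_def Hr_def sin_of_real cos_of_real)
  have hol: "Hc holomorphic_on UNIV"
    unfolding Hc_def by (intro holomorphic_intros)
  have Hc0: "Hc (of_real t0) = 0"
    using assms(4) f_Hr[OF assms(3)] by (simp add: Hc_real t0_def f_def)
  obtain p1 where p1: "p1 \<in> {0..1}" "f p1 \<noteq> 0" using assms(2) f_def by auto
  have nc: "\<not> Hc constant_on UNIV"
  proof
    assume "Hc constant_on UNIV"
    then obtain k where "\<And>w. Hc w = k" by (auto simp: constant_on_def)
    hence "Hc (of_real (th p1)) = Hc (of_real t0)" by simp
    thus False using Hc0 p1 f_Hr[OF p1(1)] by (simp add: Hc_real)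
  qed
  obtain G r n where n: "0 < n" and r: "0 < r"
      and Gh: "G holomorphic_on ball (of_real t0) r"
      and HG: "\<And>w. w \<in> ball (of_real t0) r \<Longrightarrow> Hc w = (w - of_real t0)^n * G w"
      and Gnz: "\<And>w. w \<in> ball (of_real t0) r \<Longrightarrow> G w \<noteq> 0"
    using holomorphic_factor_zero_nonconstant[OF hol open_UNIV connected_UNIV UNIV_I Hc0 nc]
    by metis
  define Gr where "Gr t = Re (G (of_real t))" for t
  have inball: "complex_of_real t \<in> ball (of_real t0) r" if "\<bar>t - t0\<bar> < r" for t
    using that by (simp add: dist_norm norm_of_real flip: of_real_diff)
  have key: "Hr t = (t - t0)^n * Gr t" if "\<bar>t - t0\<bar> < r" for t
  proof -
    have "complex_of_real (Hr t) = of_real ((t - t0)^n) * G (of_real t)"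
      using HG[OF inball[OF that]] by (simp add: Hc_real)
    hence "Re (complex_of_real (Hr t)) = Re (of_real ((t - t0)^n) * G (of_real t))" by simp
    thus ?thesis by (simp add: Gr_def)
  qed
  have Gcont: "continuous_on (ball (of_real t0) r) G"
    using Gh holomorphic_on_imp_continuous_on by blast
  have Grcont: "continuous_on (ball t0 r) Gr"
  proof -
    have "continuous_on (ball t0 r) (\<lambda>t. G (of_real t))"
      by (rule continuous_on_compose2[OF Gcont continuous_on_of_real])
         (auto simp: dist_real_def intro!: inball simp: abs_minus_commute)
    thus ?thesis unfolding Gr_def by (intro continuous_intros)
  qed
  have Gr0: "Gr t0 \<noteq> 0"
  proof -
    define \<phi> where "\<phi> t = Im (G (of_real t))" for t
    have "isCont (\<lambda>t. G (of_real t)) t0"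
    proof -
      have "isCont G (of_real t0)"
        using Gcont r by (simp add: continuous_on_eq_continuous_at)
      thus ?thesis by (rule isCont_o2[where f = complex_of_real, rotated]) (auto intro: continuous_intros)
    qed
    hence c1: "(\<phi> \<longlongrightarrow> \<phi> t0) (at t0)" unfolding \<phi>_def
      by (intro tendsto_intros) (simp add: isCont_def)
    have ev: "eventually (\<lambda>t. \<phi> t = 0) (at t0)"
    proof -
      have "eventually (\<lambda>t. t \<in> ball t0 r) (at t0)"
        using r by (intro eventually_at_in_open') auto
      thus ?thesis
      proof (rule eventually_mono[OF eventually_conj[OF _ eventually_neq_at_within[of t0 t0 UNIV]]])
        fix t assume t: "t \<in> ball t0 r \<and> t \<noteq> t0"
        hence tr: "\<bar>t - t0\<bar> < r" by (simp add: dist_real_def abs_minus_commute)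
        have e: "complex_of_real (Hr t) = of_real ((t - t0)^n) * G (of_real t)"
          using HG[OF inball[OF tr]] by (simp add: Hc_real)
        have "Im (complex_of_real (Hr t)) = (t - t0)^n * Im (G (of_real t))"
          by (subst e) simp
        thus "\<phi> t = 0" using t by (simp add: \<phi>_def)
      qed
    qed
    have "(\<phi> \<longlongrightarrow> 0) (at t0)" using ev by (simp add: tendsto_eventually)
    hence "\<phi> t0 = 0" using c1 tendsto_unique[OF at_neq_bot] by blast
    moreover have "G (of_real t0) \<noteq> 0" using Gnz r by simp
    ultimately show ?thesis by (auto simp: Gr_def \<phi>_def complex_eq_iff)
  qed
  have thcont: "continuous_on {0..1} th"
    unfolding th_def by (intro continuous_intros) (auto intro!: order_trans[of "-1" 0 "sqrt _"])
  obtain d where d: "d > 0" and dd: "\<And>p. p \<in> {0..1} \<Longrightarrow> dist p z < d \<Longrightarrow> dist (th p) t0 < r"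
    using thcont assms(3) r unfolding continuous_on_iff t0_def by metis
  define \<delta> where "\<delta> = d / 2"
  define P where "P = {z - \<delta>..z + \<delta>} \<inter> {0..1}"
  have \<delta>: "\<delta> > 0" using d by (simp add: \<delta>_def)
  have P01: "P \<subseteq> {0..1}" by (auto simp: P_def)
  have zP: "z \<in> P" using assms(3) \<delta> by (auto simp: P_def)
  have thr: "\<bar>th p - t0\<bar> < r" if "p \<in> P" for p
  proof -
    have "dist p z < d" using that d by (auto simp: P_def \<delta>_def dist_real_def)
    thus ?thesis using dd[of p] that P01 by (auto simp: dist_real_def)
  qed
  have fP: "f p = (th p - t0)^n * Gr (th p)" if "p \<in> P" for p
    using f_Hr[of p] key[OF thr[OF that]] that P01 by auto
  have thPc: "continuous_on P th" using continuous_on_subset[OF thcont P01] .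
  have GrPc: "continuous_on P (\<lambda>p. Gr (th p))"
    by (rule continuous_on_compose2[OF Grcont thPc])
       (use thr in \<open>auto simp: dist_real_def abs_minus_commute\<close>)
  have thb: "0 \<le> th p" "th p \<le> pi/2" "sin (th p) = sqrt p" "cos (th p) = sqrt (1 - p)"
    if "p \<in> P" for p using th_props[of p] that P01 by (auto simp: th_def)
  have t0b: "0 \<le> t0" "t0 \<le> pi/2" "sin t0 = sqrt z" "cos t0 = sqrt (1 - z)"
    using th_props[OF assms(3)] by (auto simp: th_def t0_def)
  have sncnz: "snc (th p - t0) \<noteq> 0" if "p \<in> P" for p
    using thb[OF that] t0b pi_gt_zero by (intro snc_nz) linarith
  have sncc: "continuous_on P (\<lambda>p. snc (th p - t0))"
    by (intro continuous_intros thPc)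
  have Pdef: "{z - \<delta>..z + \<delta>} \<inter> {0..1} = P" by (simp add: P_def)
  have fdef: "eval_poly3 c p (sqrt p) (sqrt (1 - p)) = f p" for p by (simp add: f_def)
  have main: "\<exists>k::nat. k > 0 \<and> (\<exists>m. continuous_on P m \<and> m z \<noteq> 0 \<and> (\<forall>p\<in>P. f p = half_pow (p - z) k * m p))"
  proof -
    consider "z = 0" | "z = 1" | "0 < z \<and> z < 1" using assms(3) by fastforce
    thus "\<exists>k::nat. k > 0 \<and> (\<exists>m. continuous_on P m \<and> m z \<noteq> 0 \<and> (\<forall>p\<in>P. f p = half_pow (p - z) k * m p))"
    proof cases
      case 1
      hence t00: "t0 = 0" by (simp add: t0_def th_def)
      define m where "m p = Gr (th p) / snc (th p - t0) ^ n" for p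
      have "continuous_on P m" unfolding m_def
        using sncnz by (intro continuous_intros GrPc sncc) auto
      moreover have "m z \<noteq> 0" using Gr0 by (simp add: m_def t0_def snc_def)
      moreover have "f p = half_pow (p - z) n * m p" if "p \<in> P" for p
      proof -
        have "sqrt p = (th p - t0) * snc (th p - t0)" using thb[OF that] t00 sin_snc[of "th p"] by simp
        hence "th p - t0 = sqrt p / snc (th p - t0)" using sncnz[OF that] by (simp add: field_simps)
        hence e1: "(th p - t0) ^ n = sqrt p ^ n / snc (th p - t0) ^ n" by (metis power_divide)
        have "half_pow (p - z) n = sqrt p ^ n" using 1 that P01 by (auto simp: half_pow_nonneg)
        thus ?thesis using fP[OF that] e1 by (simp add: m_def)
      qed
      ultimately show ?thesis using n by blast
    next
      case 2
      hence t00: "t0 = pi/2" by (simp add: t0_def th_def)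
      define \<sigma> :: real where "\<sigma> = (if even n then (-1) ^ (n div 2) else 1)"
      have \<sigma>2: "\<sigma> * \<sigma> = 1" by (simp add: \<sigma>_def flip: power_add)
      define m where "m p = (-1)^n * \<sigma> * Gr (th p) / snc (th p - t0) ^ n" for p
      have "continuous_on P m" unfolding m_def
        using sncnz by (intro continuous_intros GrPc sncc) auto
      moreover have "m z \<noteq> 0" using Gr0 \<sigma>2 by (auto simp: m_def t0_def snc_def)
      moreover have "f p = half_pow (p - z) n * m p" if "p \<in> P" for p
      proof -
        have "sin (th p - t0) = - cos (th p)" unfolding t00 by (simp add: sin_diff)
        hence "- sqrt (1 - p) = (th p - t0) * snc (th p - t0)" using thb[OF that] sin_snc[of "th p - t0"] by simp
        hence "th p - t0 = - sqrt (1 - p) / snc (th p - t0)" using sncnz[OF that] by (simp add: field_simps)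
        hence "(th p - t0) ^ n = (- sqrt (1 - p) / snc (th p - t0)) ^ n" by metis
        also have "\<dots> = (-1)^n * sqrt (1 - p) ^ n / snc (th p - t0) ^ n"
          by (simp add: power_divide power_minus')
        finally have e1: "(th p - t0) ^ n = (-1)^n * sqrt (1 - p) ^ n / snc (th p - t0) ^ n" .
        have e2: "half_pow (p - z) n = \<sigma> * sqrt (1 - p) ^ n" using 2 that P01
          by (auto simp: half_pow_nonpos \<sigma>_def)
        show ?thesis using fP[OF that] e1 e2 \<sigma>2
          by (simp add: m_def field_simps)
      qed
      ultimately show ?thesis using n by blast
    next
      case 3
      have spos: "sin (th p + t0) > 0" if "p \<in> P" for p
      proof -
        have "sin (th p + t0) = sqrt p * sqrt (1 - z) + sqrt (1 - p) * sqrt z"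
          using thb[OF that] t0b by (simp add: sin_add)
        moreover have "sqrt p * sqrt (1 - z) + sqrt (1 - p) * sqrt z > 0"
        proof (cases "p = 0")
          case True thus ?thesis using 3 by simp
        next
          case False
          hence "sqrt p * sqrt (1 - z) > 0" using 3 that P01 by auto
          moreover have "p \<le> 1" using that P01 by auto
          hence "sqrt (1 - p) * sqrt z \<ge> 0" using 3 by simp
          ultimately show ?thesis by linarith
        qed
        ultimately show ?thesis by simp
      qed
      define m where "m p = Gr (th p) / (snc (th p - t0) * sin (th p + t0)) ^ n" for p
      have "continuous_on P m" unfolding m_def
        using sncnz spos by (intro continuous_intros GrPc sncc thPc) fastforce
      moreover have "m z \<noteq> 0" using Gr0 spos[OF zP] by (simp add: m_def t0_def snc_def)
      moreover have "f p = half_pow (p - z) (2*n) * m p" if "p \<in> P" for p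
      proof -
        have pp: "0 \<le> p" "p \<le> 1" using that P01 by auto
        have "sin (th p - t0) * sin (th p + t0)
              = (sqrt p * sqrt (1 - z) - sqrt (1 - p) * sqrt z) * (sqrt p * sqrt (1 - z) + sqrt (1 - p) * sqrt z)"
          using thb[OF that] t0b by (simp add: sin_add sin_diff)
        also have "\<dots> = (sqrt p)^2 * (sqrt (1 - z))^2 - (sqrt (1 - p))^2 * (sqrt z)^2"
          by algebra
        also have "\<dots> = p - z" using pp 3 by (simp add: algebra_simps)
        finally have "(th p - t0) * (snc (th p - t0) * sin (th p + t0)) = p - z"
          using sin_snc[of "th p - t0"] by (simp add: mult.assoc)
        hence "th p - t0 = (p - z) / (snc (th p - t0) * sin (th p + t0))"
          using sncnz[OF that] spos[OF that] by (simp add: field_simps)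
        hence e1: "(th p - t0) ^ n = (p - z) ^ n / (snc (th p - t0) * sin (th p + t0)) ^ n"
          by (metis power_divide)
        thus ?thesis using fP[OF that] by (simp add: m_def half_pow_even)
      qed
      ultimately show ?thesis using n by (intro exI[of _ "2*n"]) auto
    qed
  qed
  show ?thesis by (rule exI[of _ \<delta>], unfold Pdef fdef, intro conjI \<delta> main)
qed
end
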